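(* Let $q(y,\eta)=(\eta-Ay)^2+\frac12 Vy\cdot y$, $(y,\eta)\in\mathbb{R}^{2n}$, where $A$ is a real $n\times n$ matrix and $V$ is a complex symmetric $n\times n$ matrix with $\mathrm{Re}\,V\geq 0$. Then the restriction of $q$ to its singular space $S$ is elliptic if and only if the matrix $V$ is invertible.
   Context: For a complex-valued quadratic form $q$ on $\mathbb{R}^{2n}_{y,\eta}$ with $\mathrm{Re}\,q\geq 0$, the singular space is $S=\{Y\in\mathbb{R}^{2n};\ H^k_{\mathrm{Im}\,q}\mathrm{Re}\,q(Y)=0\ \text{for all } k\in\mathbb{N}\}$, where for real $f\in C^1(\mathbb{R}^{2n})$, $H_f=f'_{\eta}\cdot\partial_y-f'_y\cdot\partial_{\eta}$ is its Hamilton vector field. The restriction of $q$ to $S$ is called elliptic if $Y\in S$, $q(Y)=0$ imply $Y=0$. *)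

theory Defs
  imports "HOL-Analysis.Analysis"
begin

text \<open>Hamilton vector field of a real C^1 function f, applied to a function g:
  H_f g = f'_eta . d_y g - f'_y . d_eta g, i.e. the derivative of g at Y in the
  direction (f'_eta(Y), - f'_y(Y)).\<close>
definition hamilton_field ::
  "((real^'n) \<times> (real^'n) \<Rightarrow> real) \<Rightarrow> ((real^'n) \<times> (real^'n) \<Rightarrow> real) \<Rightarrow> ((real^'n) \<times> (real^'n) \<Rightarrow> real)"
  where "hamilton_field f g = (\<lambda>Y.
     frechet_derivative g (at Y)
       ((\<chi> j. frechet_derivative f (at Y) (0, axis j 1)),
        (\<chi> j. - frechet_derivative f (at Y) (axis j 1, 0))))"

definition singular_space :: "((real^'n) \<times> (real^'n) \<Rightarrow> complex) \<Rightarrow> ((real^'n) \<times> (real^'n)) set"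
  where "singular_space q = {Y. \<forall>k::nat.
     ((hamilton_field (\<lambda>Z. Im (q Z)) ^^ k) (\<lambda>Z. Re (q Z))) Y = 0}"

definition elliptic_on_singular_space :: "((real^'n) \<times> (real^'n) \<Rightarrow> complex) \<Rightarrow> bool"
  where "elliptic_on_singular_space q \<longleftrightarrow>
     (\<forall>Y \<in> singular_space q. q Y = 0 \<longrightarrow> Y = 0)"

definition cvec :: "real^'n \<Rightarrow> complex^'n"
  where "cvec y = (\<chi> i. complex_of_real (y $ i))"

text \<open>q(y,eta) = (eta - A y)^2 + 1/2 V y . y  (bilinear, not sesquilinear).\<close>
definition qAV :: "real^'n^'n \<Rightarrow> complex^'n^'n \<Rightarrow> (real^'n) \<times> (real^'n) \<Rightarrow> complex"
  where "qAV A V = (\<lambda>(y, \<eta>).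
     complex_of_real ((\<eta> - A *v y) \<bullet> (\<eta> - A *v y))
     + (1/2) * (\<Sum>i\<in>UNIV. (V *v cvec y) $ i * cvec y $ i))"

definition Re_mat :: "complex^'n^'n \<Rightarrow> real^'n^'n"
  where "Re_mat V = (\<chi> i j. Re (V $ i $ j))"

end

theory Submission
  imports Defs
begin

definition Im_mat :: "complex^'n^'n \<Rightarrow> real^'n^'n"
  where "Im_mat V = (\<chi> i j. Im (V $ i $ j))"

lemma inv_ker: "invertible (V::complex^'n^'n) \<longleftrightarrow> (\<forall>x. V *v x = 0 \<longrightarrow> x = 0)"
  by (simp add: invertible_left_inverse matrix_left_invertible_ker)

lemma Re_mv: "Re ((V *v z) $ i) = (Re_mat V *v (\<chi> j. Re (z$j))) $ i - (Im_mat V *v (\<chi> j. Im (z$j))) $ i"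
  by (simp add: matrix_vector_mult_def Re_mat_def Im_mat_def Re_sum sum_subtractf)

lemma Im_mv: "Im ((V *v z) $ i) = (Re_mat V *v (\<chi> j. Im (z$j))) $ i + (Im_mat V *v (\<chi> j. Re (z$j))) $ i"
  by (simp add: matrix_vector_mult_def Re_mat_def Im_mat_def Im_sum sum.distrib)

lemma chi0[simp]: "(\<chi> j. 0) = (0::real^'n)" by (simp add: vec_eq_iff)

lemma qRe: "Re (qAV A V (y,\<eta>)) = (\<eta> - A *v y) \<bullet> (\<eta> - A *v y) + 1/2 * (y \<bullet> (Re_mat V *v y))"
proof -
  have "Re (\<Sum>i\<in>UNIV. (V *v cvec y) $ i * cvec y $ i) = y \<bullet> (Re_mat V *v y)"
    by (simp add: cvec_def Re_sum inner_vec_def Re_mv[of V "cvec y", unfolded cvec_def] mult.commute)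
  then show ?thesis by (simp add: qAV_def)
qed

lemma qIm: "Im (qAV A V (y,\<eta>)) = 1/2 * (y \<bullet> (Im_mat V *v y))"
proof -
  have "Im (\<Sum>i\<in>UNIV. (V *v cvec y) $ i * cvec y $ i) = y \<bullet> (Im_mat V *v y)"
    by (simp add: cvec_def Im_sum inner_vec_def Im_mv[of V "cvec y", unfolded cvec_def] mult.commute)
  then show ?thesis by (simp add: qAV_def)
qed

lemma sym_inner: assumes "\<forall>i j. M$i$j = M$j$(i::'n)"
  shows "x \<bullet> ((M::real^'n^'n) *v y) = y \<bullet> (M *v x)"
proof -
  have "x \<bullet> (M *v y) = (\<Sum>i\<in>UNIV. \<Sum>j\<in>UNIV. x$i * M$i$j * y$j)"
    by (simp add: inner_vec_def matrix_vector_mult_def sum_distrib_left mult.assoc)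
  also have "\<dots> = (\<Sum>j\<in>UNIV. \<Sum>i\<in>UNIV. x$i * M$i$j * y$j)" by (rule sum.swap)
  also have "\<dots> = y \<bullet> (M *v x)"
    by (simp add: inner_vec_def matrix_vector_mult_def sum_distrib_left assms mult.commute mult.left_commute)
  finally show ?thesis .
qed

lemma mv_fst: "((\<lambda>x. (W::real^'n^'m) *v fst x) has_derivative (\<lambda>h. W *v fst h)) F"
  by (rule bounded_linear.has_derivative[OF matrix_vector_mul_bounded_linear has_derivative_fst[OF has_derivative_ident]])

lemma mv_snd: "((\<lambda>x. (W::real^'n^'m) *v snd x) has_derivative (\<lambda>h. W *v snd h)) F"
  by (rule bounded_linear.has_derivative[OF matrix_vector_mul_bounded_linear has_derivative_snd[OF has_derivative_ident]])

lemma chi_neg[simp]: "(\<chi> j. - (x::real^'n)$j) = -x" by (simp add: vec_eq_iff)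

lemma hf: "((\<lambda>Z. 1/2 * (fst Z \<bullet> ((W::real^'n^'n) *v fst Z))) has_derivative
   (\<lambda>h. 1/2 * (fst h \<bullet> (W *v fst Z) + fst Z \<bullet> (W *v fst h)))) (at Z)"
  by (auto intro!: derivative_eq_intros mv_fst bounded_linear.has_derivative[OF matrix_vector_mul_bounded_linear])

lemma fIm: "(\<lambda>Z. Im (qAV A V Z)) = (\<lambda>Z. 1/2 * (fst Z \<bullet> (Im_mat V *v fst Z)))"
  by (auto simp: qIm)

lemma ham: assumes "\<forall>i j. Im_mat V$i$j = Im_mat V$j$i"
  shows "hamilton_field (\<lambda>Z. Im (qAV A V Z)) g = (\<lambda>Y. frechet_derivative g (at Y) (0, - (Im_mat V *v fst Y)))"
proof -
  note F = frechet_derivative_at[OF hf[of "Im_mat V"], symmetric]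
  show ?thesis
    unfolding hamilton_field_def fIm F
    by (auto simp: vec_eq_iff sym_inner[OF assms, of _ "axis _ 1"] inner_axis' intro!: ext)
qed


definition g0 :: "real^'n^'n \<Rightarrow> real^'n^'n \<Rightarrow> (real^'n) \<times> (real^'n) \<Rightarrow> real" where
  "g0 A R = (\<lambda>Y. (snd Y - A *v fst Y) \<bullet> (snd Y - A *v fst Y) + 1/2 * (fst Y \<bullet> (R *v fst Y)))"
definition g1 :: "real^'n^'n \<Rightarrow> real^'n^'n \<Rightarrow> (real^'n) \<times> (real^'n) \<Rightarrow> real" where
  "g1 A W = (\<lambda>Y. -2 * ((W *v fst Y) \<bullet> (snd Y - A *v fst Y)))"
definition g2 :: "real^'n^'n \<Rightarrow> (real^'n) \<times> (real^'n) \<Rightarrow> real" where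
  "g2 W = (\<lambda>Y. 2 * ((W *v fst Y) \<bullet> (W *v fst Y)))"

lemma fRe: "(\<lambda>Z. Re (qAV A V Z)) = g0 A (Re_mat V)"
  by (auto simp: qRe g0_def)

lemma dg0: "(g0 A R has_derivative (\<lambda>h. (snd h - A *v fst h) \<bullet> (snd Y - A *v fst Y) + (snd Y - A *v fst Y) \<bullet> (snd h - A *v fst h)
   + 1/2 * (fst h \<bullet> (R *v fst Y) + fst Y \<bullet> (R *v fst h)))) (at Y)"
  unfolding g0_def
  by (auto intro!: derivative_eq_intros mv_fst)

lemma dg1: "(g1 A W has_derivative (\<lambda>h. -2 * ((W *v fst h) \<bullet> (snd Y - A *v fst Y) + (W *v fst Y) \<bullet> (snd h - A *v fst h)))) (at Y)"
  unfolding g1_def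
  by (auto intro!: derivative_eq_intros mv_fst)

lemma dg2: "(g2 W has_derivative (\<lambda>h. 2 * ((W *v fst h) \<bullet> (W *v fst Y) + (W *v fst Y) \<bullet> (W *v fst h)))) (at Y)"
  unfolding g2_def
  by (auto intro!: derivative_eq_intros mv_fst)
lemma Hg0: assumes "\<forall>i j. Im_mat V$i$j = Im_mat V$j$i"
  shows "hamilton_field (\<lambda>Z. Im (qAV A V Z)) (g0 A R) = g1 A (Im_mat V)"
  unfolding ham[OF assms] frechet_derivative_at[OF dg0, symmetric]
  by (auto simp: g1_def inner_commute intro!: ext)

lemma Hg1: assumes "\<forall>i j. Im_mat V$i$j = Im_mat V$j$i"
  shows "hamilton_field (\<lambda>Z. Im (qAV A V Z)) (g1 A (Im_mat V)) = g2 (Im_mat V)"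
  unfolding ham[OF assms] frechet_derivative_at[OF dg1, symmetric]
  by (auto simp: g2_def inner_commute intro!: ext)

lemma Hg2: assumes "\<forall>i j. Im_mat V$i$j = Im_mat V$j$i"
  shows "hamilton_field (\<lambda>Z. Im (qAV A V Z)) (g2 (Im_mat V)) = (\<lambda>_. 0)"
  unfolding ham[OF assms] frechet_derivative_at[OF dg2, symmetric]
  by (auto intro!: ext)

lemma Hz: assumes "\<forall>i j. Im_mat V$i$j = Im_mat V$j$i"
  shows "hamilton_field (\<lambda>Z. Im (qAV A V Z)) (\<lambda>_. 0) = (\<lambda>_. 0)"
  unfolding ham[OF assms] frechet_derivative_at[OF has_derivative_const, symmetric]
  by (auto intro!: ext)

lemma Hk: assumes "\<forall>i j. Im_mat V$i$j = Im_mat V$j$i"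
  shows "((hamilton_field (\<lambda>Z. Im (qAV A V Z))) ^^ Suc (Suc (Suc k))) (\<lambda>Z. Re (qAV A V Z)) = (\<lambda>_. 0)"
proof (induction k)
  case 0
  show ?case by (simp add: numeral_3_eq_3 fRe Hg0[OF assms] Hg1[OF assms] Hg2[OF assms])
next
  case (Suc k)
  then show ?case by (simp only: funpow.simps(2) comp_apply Suc.IH Hz[OF assms])
qed

lemma sing: assumes "\<forall>i j. Im_mat V$i$j = Im_mat V$j$i"
  shows "Y \<in> singular_space (qAV A V) \<longleftrightarrow> g0 A (Re_mat V) Y = 0 \<and> g1 A (Im_mat V) Y = 0 \<and> g2 (Im_mat V) Y = 0"
proof
  assume "Y \<in> singular_space (qAV A V)"
  then have h: "\<And>k. ((hamilton_field (\<lambda>Z. Im (qAV A V Z)) ^^ k) (\<lambda>Z. Re (qAV A V Z))) Y = 0"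
    unfolding singular_space_def by blast
  from h[of 0] h[of 1] h[of 2] show "g0 A (Re_mat V) Y = 0 \<and> g1 A (Im_mat V) Y = 0 \<and> g2 (Im_mat V) Y = 0"
    by (simp_all add: numeral_2_eq_2 fRe Hg0[OF assms] Hg1[OF assms])
next
  assume a: "g0 A (Re_mat V) Y = 0 \<and> g1 A (Im_mat V) Y = 0 \<and> g2 (Im_mat V) Y = 0"
  have "((hamilton_field (\<lambda>Z. Im (qAV A V Z)) ^^ k) (\<lambda>Z. Re (qAV A V Z))) Y = 0" for k
  proof -
    have "k = 0 \<or> k = 1 \<or> k = 2 \<or> (\<exists>j. k = Suc (Suc (Suc j)))" by presburger
    then show ?thesis
      using a by (elim disjE exE) (simp_all only: Hk[OF assms], simp_all add: numeral_2_eq_2 fRe Hg0[OF assms] Hg1[OF assms])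
  qed
  then show "Y \<in> singular_space (qAV A V)" unfolding singular_space_def by blast
qed

lemma psd0: assumes psd: "\<forall>y. 0 \<le> y \<bullet> ((R::real^'n^'n) *v y)" and sym: "\<forall>i j. R$i$j = R$j$i"
  and y: "y \<bullet> (R *v y) = 0"
  shows "R *v y = 0"
proof -
  have key: "z \<bullet> (R *v y) = 0" for z
  proof (rule ccontr)
    define c where "c = z \<bullet> (R *v y)"
    define d where "d = z \<bullet> (R *v z)"
    assume "z \<bullet> (R *v y) \<noteq> 0"
    then have c: "c \<noteq> 0" by (simp add: c_def)
    have d: "d \<ge> 0" using psd d_def by blast
    have exp: "(y + t *\<^sub>R z) \<bullet> (R *v (y + t *\<^sub>R z)) = 2 * t * c + t^2 * d" for t
      using sym_inner[OF sym, of y z] y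
      by (simp add: matrix_vector_right_distrib matrix_vector_mult_scaleR inner_add_left inner_add_right
           c_def d_def power2_eq_square algebra_simps)
    define t where "t = - c / (d + 1)"
    have "2 * t * c + t^2 * d = c^2 * (- d - 2) / (d+1)^2"
    proof -
      have "d + 1 \<noteq> 0" using d by simp
      then show ?thesis unfolding t_def by (simp add: divide_simps power2_eq_square) (simp add: algebra_simps)
    qed
    also have "\<dots> < 0" using c d by (intro divide_neg_pos mult_pos_neg) auto
    finally show False using psd exp[of t] by (metis not_le)
  qed
  show ?thesis using key[of "R *v y"] by simp
qed

theorem lemma2p2:
  fixes A :: "real^'n^'n" and V :: "complex^'n^'n"
  assumes "transpose V = V"
    and "\<forall>y::real^'n. 0 \<le> y \<bullet> (Re_mat V *v y)"
  shows "elliptic_on_singular_space (qAV A V) \<longleftrightarrow> invertible V"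
proof -
  have symV: "V$i$j = V$j$i" for i j using assms(1) by (metis transpose_def vec_lambda_beta)
  have symR: "\<forall>i j. Re_mat V$i$j = Re_mat V$j$i" by (simp add: Re_mat_def symV)
  have symW: "\<forall>i j. Im_mat V$i$j = Im_mat V$j$i" by (simp add: Im_mat_def symV)
  note S = sing[OF symW]
  note psd = psd0[OF assms(2) symR]
  show ?thesis
  proof
    assume E: "elliptic_on_singular_space (qAV A V)"
    have kill: "y = 0" if "Re_mat V *v y = 0" "Im_mat V *v y = 0" for y
    proof -
      have "(y, A *v y) \<in> singular_space (qAV A V)"
        unfolding S using that by (simp add: g0_def g1_def g2_def)
      moreover have "qAV A V (y, A *v y) = 0"
        using that by (intro complex_eqI) (simp_all add: qRe qIm)
      ultimately have "(y, A *v y) = 0" using E unfolding elliptic_on_singular_space_def by blast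
      then show ?thesis by (simp add: zero_prod_def)
    qed
    show "invertible V" unfolding inv_ker
    proof (intro allI impI)
      fix z assume Vz: "V *v z = 0"
      define a where "a = (\<chi> j. Re (z$j))"
      define b where "b = (\<chi> j. Im (z$j))"
      have e1: "Re_mat V *v a - Im_mat V *v b = 0"
        using Re_mv[of V z] Vz by (simp add: vec_eq_iff a_def b_def)
      have e2: "Re_mat V *v b + Im_mat V *v a = 0"
        using Im_mv[of V z] Vz by (simp add: vec_eq_iff a_def b_def)
      have "a \<bullet> (Re_mat V *v a) + b \<bullet> (Re_mat V *v b) = a \<bullet> (Im_mat V *v b) - b \<bullet> (Im_mat V *v a)"
        using arg_cong[OF e1, of "inner a"] arg_cong[OF e2, of "inner b"]
        by (simp add: inner_diff_right inner_add_right)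
      also have "\<dots> = 0" using sym_inner[OF symW, of a b] by simp
      finally have "a \<bullet> (Re_mat V *v a) + b \<bullet> (Re_mat V *v b) = 0" .
      moreover have "0 \<le> a \<bullet> (Re_mat V *v a)" "0 \<le> b \<bullet> (Re_mat V *v b)" using assms(2) by auto
      ultimately have "a \<bullet> (Re_mat V *v a) = 0" "b \<bullet> (Re_mat V *v b) = 0" by linarith+
      then have Ra: "Re_mat V *v a = 0" and Rb: "Re_mat V *v b = 0" using psd by blast+
      have Wa: "Im_mat V *v a = 0" using e2 Rb by simp
      have Wb: "Im_mat V *v b = 0" using e1 Ra by simp
      have "a = 0" using kill Ra Wa by blast
      moreover have "b = 0" using kill Rb Wb by blast
      ultimately show "z = 0" by (simp add: vec_eq_iff a_def b_def complex_eq_iff)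
    qed
  next
    assume I: "invertible V"
    show "elliptic_on_singular_space (qAV A V)"
      unfolding elliptic_on_singular_space_def
    proof (intro ballI impI)
      fix Y assume Y: "Y \<in> singular_space (qAV A V)"
      obtain y \<eta> where Yd: "Y = (y, \<eta>)" by fastforce
      have h0: "(\<eta> - A *v y) \<bullet> (\<eta> - A *v y) + 1/2 * (y \<bullet> (Re_mat V *v y)) = 0"
        and h2: "(Im_mat V *v y) \<bullet> (Im_mat V *v y) = 0"
        using Y unfolding S Yd by (simp_all add: g0_def g2_def)
      have "0 \<le> y \<bullet> (Re_mat V *v y)" using assms(2) by auto
      moreover have "0 \<le> (\<eta> - A *v y) \<bullet> (\<eta> - A *v y)" by simp
      ultimately have "(\<eta> - A *v y) \<bullet> (\<eta> - A *v y) = 0" and yRy: "y \<bullet> (Re_mat V *v y) = 0"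
        using h0 by linarith+
      then have eta: "\<eta> - A *v y = 0" by simp
      have Ry: "Re_mat V *v y = 0" using psd yRy by blast
      have Wy: "Im_mat V *v y = 0" using h2 by simp
      have cr: "(\<chi> j. Re (cvec y $ j)) = y" "(\<chi> j. Im (cvec y $ j)) = 0"
        by (simp_all add: vec_eq_iff cvec_def)
      have "V *v cvec y = 0"
        using Re_mv[of V "cvec y"] Im_mv[of V "cvec y"] Ry Wy
        by (simp add: vec_eq_iff complex_eq_iff cr)
      then have "cvec y = 0" using I inv_ker by blast
      then have "y = 0" by (simp add: vec_eq_iff cvec_def)
      then show "Y = 0" using eta Yd by (simp add: zero_prod_def)
    qed
  qed
qed

end
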